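(* For every $n\ge 1$, every doubly stochastic $n\times n$ matrix $\mathcal M$ and every $\kappa\le\frac{n}{2n-1}$, there exists a directed $(2n-1)$-regular multigraph $G$ on $[n]$ whose throughput with respect to $\mathcal M$ is at least $\kappa$.
   Context: Let $n\ge 1$ and $[n]=\{1,\dots,n\}$. Networks are finite directed multigraphs on vertex set $[n]$; self-loops and parallel arcs are allowed. A directed multigraph is directed $r$-regular if every vertex has exactly $r$ outgoing and exactly $r$ incoming arcs (a self-loop at $v$ counts as one outgoing and one incoming arc of $v$). A path is a non-empty sequence of arcs $((u_1,v_1),\dots,(u_\ell,v_\ell))$ with $v_i=u_{i+1}$ for $i<\ell$; it goes from $u_1$ to $v_\ell$ and has length $\ell\ge 1$. An $n\times n$ matrix is doubly stochastic if all entries are nonnegative and every row and every column sums to $1$. In a directed $(2n-1)$-regular multigraph $G$ on $[n]$ every arc has capacity $\frac{1}{2n-1}$. $G$ hosts a nonnegative $n\times n$ matrix $\mathcal M=(a_{i,j})$ if there is a finite collection $\{(P_k,d_k)\}$, where each $P_k$ is a path in $G$ from some $s_k$ to some $t_k$ and $d_k\ge 0$, such that $\sum_{k:\,s_k=u,\,t_k=v} d_k=a_{u,v}$ for all $u,v\in[n]$, and for every arc $e$ of $G$ (parallel arcs are distinct) $\sum_{k:\,e\in P_k} d_k\le \frac{1}{2n-1}$. The throughput of $G$ with respect to a doubly stochastic $\mathcal M$ is the largest $\theta$ such that $G$ hosts $\theta\mathcal M$. *)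

theory Defs
  imports Complex_Main
begin

text \<open>A network on [n] = {1..n} is a finite directed multigraph, given as a list of arcs;
  arc number i (for i < length G) goes from fst (G!i) to snd (G!i).  Parallel arcs are
  distinct list positions; self-loops are allowed.\<close>

type_synonym multigraph = "(nat \<times> nat) list"

definition arcs_in :: "nat \<Rightarrow> multigraph \<Rightarrow> bool" where
  "arcs_in n G \<longleftrightarrow> (\<forall>e\<in>set G. fst e \<in> {1..n} \<and> snd e \<in> {1..n})"

definition dir_regular :: "nat \<Rightarrow> nat \<Rightarrow> multigraph \<Rightarrow> bool" where
  "dir_regular n r G \<longleftrightarrow> arcs_in n G \<and>
     (\<forall>v\<in>{1..n}. card {i. i < length G \<and> fst (G!i) = v} = r
               \<and> card {i. i < length G \<and> snd (G!i) = v} = r)"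

definition is_path :: "multigraph \<Rightarrow> nat list \<Rightarrow> bool" where
  "is_path G P \<longleftrightarrow> P \<noteq> [] \<and> (\<forall>k\<in>set P. k < length G) \<and>
     (\<forall>i. Suc i < length P \<longrightarrow> snd (G ! (P!i)) = fst (G ! (P ! Suc i)))"

definition path_src :: "multigraph \<Rightarrow> nat list \<Rightarrow> nat" where
  "path_src G P = fst (G ! hd P)"

definition path_tgt :: "multigraph \<Rightarrow> nat list \<Rightarrow> nat" where
  "path_tgt G P = snd (G ! last P)"

definition hosts :: "nat \<Rightarrow> multigraph \<Rightarrow> (nat \<Rightarrow> nat \<Rightarrow> real) \<Rightarrow> bool" where
  "hosts n G a \<longleftrightarrow> (\<exists>ps :: (nat list \<times> real) list.
     (\<forall>(P, d)\<in>set ps. is_path G P \<and> d \<ge> 0) \<and>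
     (\<forall>u\<in>{1..n}. \<forall>v\<in>{1..n}.
        sum_list (map snd (filter (\<lambda>(P, d). path_src G P = u \<and> path_tgt G P = v) ps)) = a u v) \<and>
     (\<forall>e < length G.
        sum_list (map snd (filter (\<lambda>(P, d). e \<in> set P) ps)) \<le> 1 / (2 * real n - 1)))"

definition doubly_stochastic :: "nat \<Rightarrow> (nat \<Rightarrow> nat \<Rightarrow> real) \<Rightarrow> bool" where
  "doubly_stochastic n M \<longleftrightarrow>
     (\<forall>i\<in>{1..n}. \<forall>j\<in>{1..n}. M i j \<ge> 0) \<and>
     (\<forall>i\<in>{1..n}. (\<Sum>j=1..n. M i j) = 1) \<and>
     (\<forall>j\<in>{1..n}. (\<Sum>i=1..n. M i j) = 1)"

definition throughput :: "nat \<Rightarrow> multigraph \<Rightarrow> (nat \<Rightarrow> nat \<Rightarrow> real) \<Rightarrow> real" where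
  "throughput n G M = Sup {\<theta>. hosts n G (\<lambda>u v. \<theta> * M u v)}"

end

theory Submission imports Defs begin

definition L1 :: "nat \<Rightarrow> (nat \<times> nat) list" where
  "L1 n = List.product [1..<n+1] [1..<n+1]"
definition GG :: "nat \<Rightarrow> (nat \<times> nat) list" where
  "GG n = L1 n @ filter (\<lambda>p. fst p \<noteq> snd p) (L1 n)"
definition i1 :: "nat \<Rightarrow> nat \<Rightarrow> nat \<Rightarrow> nat" where
  "i1 n a b = (SOME i. i < n*n \<and> GG n ! i = (a,b))"
definition i2 :: "nat \<Rightarrow> nat \<Rightarrow> nat \<Rightarrow> nat" where
  "i2 n a b = (SOME i. n*n \<le> i \<and> i < length (GG n) \<and> GG n ! i = (a,b))"
definition pth :: "nat \<Rightarrow> nat \<Rightarrow> nat \<Rightarrow> nat \<Rightarrow> nat list" where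
  "pth n u v w = (if w = v then [i1 n u v] else [i1 n u w, i2 n w v])"

lemma setL1: "set (L1 n) = {1..n} \<times> {1..n}"
  by (auto simp: L1_def)
lemma distL1: "distinct (L1 n)"
  by (simp add: L1_def distinct_product)
lemma lenL1: "length (L1 n) = n*n"
  by (simp add: L1_def)

lemma setGG: "set (GG n) \<subseteq> {1..n} \<times> {1..n}"
  by (auto simp: GG_def setL1)

lemma i1_prop: assumes "a \<in> {1..n}" "b \<in> {1..n}"
  shows "i1 n a b < n*n \<and> GG n ! i1 n a b = (a,b)"
proof -
  have "(a,b) \<in> set (L1 n)" using assms by (simp add: setL1)
  then obtain i where i: "i < length (L1 n)" "L1 n ! i = (a,b)" by (auto simp: in_set_conv_nth)
  hence "i < n*n \<and> GG n ! i = (a,b)" by (simp add: GG_def nth_append lenL1)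
  thus ?thesis unfolding i1_def by (rule someI)
qed

lemma i2_prop: assumes "a \<in> {1..n}" "b \<in> {1..n}" "a \<noteq> b"
  shows "n*n \<le> i2 n a b \<and> i2 n a b < length (GG n) \<and> GG n ! i2 n a b = (a,b)"
proof -
  let ?L = "filter (\<lambda>p. fst p \<noteq> snd p) (L1 n)"
  have "(a,b) \<in> set ?L" using assms by (simp add: setL1)
  then obtain j where j: "j < length ?L" "?L ! j = (a,b)" using in_set_conv_nth[THEN iffD1, OF \<open>(a,b) \<in> set ?L\<close>] by blast
  hence "n*n \<le> n*n+j \<and> n*n+j < length (GG n) \<and> GG n ! (n*n+j) = (a,b)"
    by (simp add: GG_def nth_append lenL1)
  thus ?thesis unfolding i2_def by (rule someI)
qed

lemma card_fst: "length (filter P (L1 n)) = card {p \<in> {1..n}\<times>{1..n}. P p}"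
proof -
  have "length (filter P (L1 n)) = card (set (filter P (L1 n)))"
    using distinct_card[OF distinct_filter[OF distL1], of P] by simp
  also have "set (filter P (L1 n)) = {p \<in> {1..n}\<times>{1..n}. P p}" by (auto simp: setL1)
  finally show ?thesis .
qed

lemma regular: "dir_regular n (2*n-1) (GG n)"
proof -
  have "arcs_in n (GG n)" using setGG unfolding arcs_in_def by fastforce
  moreover have "card {i. i < length (GG n) \<and> fst (GG n!i) = v} = 2*n-1
      \<and> card {i. i < length (GG n) \<and> snd (GG n!i) = v} = 2*n-1" if v: "v \<in> {1..n}" for v
  proof -
    have c1: "card {i. i < length (GG n) \<and> fst (GG n!i) = v} = length (filter (\<lambda>p. fst p = v) (GG n))"
      by (simp add: length_filter_conv_card)
    have c2: "card {i. i < length (GG n) \<and> snd (GG n!i) = v} = length (filter (\<lambda>p. snd p = v) (GG n))"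
      by (simp add: length_filter_conv_card)
    have e1: "{p \<in> {1..n}\<times>{1..n}. fst p = v} = {v} \<times> {1..n}" using v by auto
    have e2: "{p \<in> {1..n}\<times>{1..n}. fst p \<noteq> snd p \<and> fst p = v} = {v} \<times> ({1..n}-{v})" using v by auto
    have e3: "{p \<in> {1..n}\<times>{1..n}. snd p = v} = {1..n} \<times> {v}" using v by auto
    have e4: "{p \<in> {1..n}\<times>{1..n}. fst p \<noteq> snd p \<and> snd p = v} = ({1..n}-{v}) \<times> {v}" using v by auto
    have n1: "n \<ge> 1" using v by auto
    have f1: "length (filter (\<lambda>p. fst p = v) (L1 n)) = n"
      by (simp only: card_fst e1) (simp add: card_cartesian_product)
    have f2: "length (filter (\<lambda>p. fst p \<noteq> snd p \<and> fst p = v) (L1 n)) = n-1"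
      by (simp only: card_fst e2) (use v in \<open>simp add: card_cartesian_product\<close>)
    have f3: "length (filter (\<lambda>p. snd p = v) (L1 n)) = n"
      by (simp only: card_fst e3) (simp add: card_cartesian_product)
    have f4: "length (filter (\<lambda>p. fst p \<noteq> snd p \<and> snd p = v) (L1 n)) = n-1"
      by (simp only: card_fst e4) (use v in \<open>simp add: card_cartesian_product\<close>)
    have "length (filter (\<lambda>p. fst p = v) (GG n)) = n + (n-1)"
      unfolding GG_def using f1 f2 by (simp add: filter_filter)
    moreover have "length (filter (\<lambda>p. snd p = v) (GG n)) = n + (n-1)"
      unfolding GG_def using f3 f4 by (simp add: filter_filter)
    ultimately show ?thesis using c1 c2 n1 by simp
  qed
  ultimately show ?thesis unfolding dir_regular_def by blast
qed


lemma lenGG: "n*n \<le> length (GG n)"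
  by (simp add: GG_def lenL1)

lemma path_ok: assumes "u \<in> {1..n}" "v \<in> {1..n}" "w \<in> {1..n}"
  shows "is_path (GG n) (pth n u v w) \<and> path_src (GG n) (pth n u v w) = u
         \<and> path_tgt (GG n) (pth n u v w) = v"
proof (cases "w = v")
  case True
  then show ?thesis using i1_prop[OF assms(1,2)] lenGG[of n]
    by (simp add: pth_def is_path_def path_src_def path_tgt_def)
next
  case False
  have a: "i1 n u w < n*n \<and> GG n ! i1 n u w = (u,w)" using i1_prop[OF assms(1,3)] .
  have b: "n*n \<le> i2 n w v \<and> i2 n w v < length (GG n) \<and> GG n ! i2 n w v = (w,v)"
    using i2_prop[OF assms(3,2) False] .
  have c: "\<forall>i. Suc i < 2 \<longrightarrow> snd (GG n ! ([i1 n u w, i2 n w v] ! i)) = fst (GG n ! ([i1 n u w, i2 n w v] ! Suc i))"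
    using a b by (auto simp: less_Suc_eq)
  show ?thesis using a b c lenGG[of n] False
    by (auto simp: pth_def is_path_def path_src_def path_tgt_def)
qed

lemma mem_pth: assumes "u \<in> {1..n}" "v \<in> {1..n}" "w \<in> {1..n}" "e \<in> set (pth n u v w)"
  shows "(e < n*n \<and> GG n ! e = (u,w)) \<or> (n*n \<le> e \<and> GG n ! e = (w,v))"
proof (cases "w = v")
  case True
  then show ?thesis using i1_prop[OF assms(1,2)] assms(4) by (simp add: pth_def)
next
  case False
  then show ?thesis using i1_prop[OF assms(1,3)] i2_prop[OF assms(3,2) False] assms(4)
    by (auto simp: pth_def)
qed

lemma sumlist_filter: "distinct xs \<Longrightarrow>
  sum_list (map snd (filter Q (map h xs))) = (\<Sum>t\<in>set xs. if Q (h t) then snd (h t) else (0::real))"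
  by (induction xs) auto

lemma triple_sum: "finite A \<Longrightarrow> (\<Sum>t\<in>A\<times>A\<times>A. f t) = (\<Sum>u\<in>A. \<Sum>v\<in>A. \<Sum>w\<in>A. (f (u,v,w) :: real))"
  by (simp add: sum.cartesian_product split_def)

lemma delta2: "finite A \<Longrightarrow> u \<in> A \<Longrightarrow> v \<in> A \<Longrightarrow>
  (\<Sum>x\<in>A. \<Sum>y\<in>A. \<Sum>z\<in>A. if x = u \<and> y = v then g x y else 0) = real (card A) * (g u v :: real)"
proof -
  assume f: "finite A" and uv: "u \<in> A" "v \<in> A"
  have 1: "(\<Sum>z\<in>A. if x = u \<and> y = v then g x y else 0) = (if x = u \<and> y = v then real (card A) * g x y else 0)" for x y
    by simp
  have 2: "(\<Sum>y\<in>A. if x = u \<and> y = v then real (card A) * g x y else 0) = (if x = u then real (card A) * g x v else 0)" for x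
    using f uv by (cases "x = u") (simp_all add: sum.delta')
  show ?thesis by (simp only: 1 2) (simp add: sum.delta f uv)
qed
lemma delta_row: "finite A \<Longrightarrow> a \<in> A \<Longrightarrow> b \<in> A \<Longrightarrow>
  (\<Sum>x\<in>A. \<Sum>y\<in>A. \<Sum>z\<in>A. if x = a \<and> z = b then g x y else 0) = (\<Sum>y\<in>A. (g a y :: real))"
proof -
  assume f: "finite A" and uv: "a \<in> A" "b \<in> A"
  have 1: "(\<Sum>z\<in>A. if x = a \<and> z = b then g x y else 0) = (if x = a then g x y else 0)" for x y
    using f uv by (cases "x = a") (simp_all add: sum.delta')
  have 2: "(\<Sum>y\<in>A. if x = a then g x y else 0) = (if x = a then (\<Sum>y\<in>A. g x y) else 0)" for x
    by simp
  show ?thesis by (simp only: 1 2) (simp add: sum.delta f uv)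
qed
lemma delta_col: "finite A \<Longrightarrow> a \<in> A \<Longrightarrow> b \<in> A \<Longrightarrow>
  (\<Sum>x\<in>A. \<Sum>y\<in>A. \<Sum>z\<in>A. if z = a \<and> y = b then g x y else 0) = (\<Sum>x\<in>A. (g x b :: real))"
proof -
  assume f: "finite A" and uv: "a \<in> A" "b \<in> A"
  have 1: "(\<Sum>z\<in>A. if z = a \<and> y = b then g x y else 0) = (if y = b then g x y else 0)" for x y
    using f uv by (cases "y = b") (simp_all add: sum.delta')
  have 2: "(\<Sum>y\<in>A. if y = b then g x y else 0) = g x b" for x
    using f uv by (simp add: sum.delta')
  show ?thesis by (simp only: 1 2)
qed

lemma hosting:
  assumes n1: "n \<ge> 1" and ds: "doubly_stochastic n M"
  shows "hosts n (GG n) (\<lambda>u v. (real n / (2 * real n - 1)) * M u v)"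
proof -
  define \<theta> where "\<theta> = real n / (2 * real n - 1)"
  define A where "A = {1..n}"
  define T where "T = A \<times> A \<times> A"
  have finA: "finite A" by (simp add: A_def)
  have finT: "finite T" by (simp add: T_def finA)
  obtain xs where xs: "set xs = T" "distinct xs" using finite_distinct_list[OF finT] by blast
  define d where "d = (\<lambda>t::nat\<times>nat\<times>nat. \<theta> * M (fst t) (fst (snd t)) / real n)"
  define h where "h = (\<lambda>t::nat\<times>nat\<times>nat. (pth n (fst t) (fst (snd t)) (snd (snd t)), d t))"
  define ps where "ps = map h xs"
  have npos: "real n > 0" using n1 by simp
  have thpos: "\<theta> \<ge> 0" unfolding \<theta>_def using n1 by simp
  have Mnn: "\<And>u v. u \<in> A \<Longrightarrow> v \<in> A \<Longrightarrow> M u v \<ge> 0"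
    using ds unfolding doubly_stochastic_def A_def by blast
  have row: "\<And>u. u \<in> A \<Longrightarrow> (\<Sum>v\<in>A. M u v) = 1"
    using ds unfolding doubly_stochastic_def A_def by blast
  have col: "\<And>v. v \<in> A \<Longrightarrow> (\<Sum>u\<in>A. M u v) = 1"
    using ds unfolding doubly_stochastic_def A_def by blast
  have dnn: "\<And>t. t \<in> T \<Longrightarrow> d t \<ge> 0"
    unfolding d_def T_def using Mnn thpos npos by auto
  have thn: "\<theta> / real n = 1 / (2 * real n - 1)"
    unfolding \<theta>_def using npos by (simp add: field_simps)
  have P1: "\<forall>(P, dd)\<in>set ps. is_path (GG n) P \<and> dd \<ge> 0"
    unfolding ps_def h_def using xs(1) path_ok dnn unfolding T_def A_def by auto
  have P2: "sum_list (map snd (filter (\<lambda>(P, dd). path_src (GG n) P = u \<and> path_tgt (GG n) P = v) ps))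
       = \<theta> * M u v" if uv: "u \<in> A" "v \<in> A" for u v
  proof -
    have "sum_list (map snd (filter (\<lambda>(P, dd). path_src (GG n) P = u \<and> path_tgt (GG n) P = v) ps))
        = (\<Sum>t\<in>T. if fst t = u \<and> fst (snd t) = v then d t else 0)"
      unfolding ps_def
      apply (subst sumlist_filter[OF xs(2)])
      apply (unfold xs(1))
      apply (rule sum.cong, simp)
      using path_ok unfolding h_def T_def A_def by auto
    also have "\<dots> = (\<Sum>u'\<in>A. \<Sum>v'\<in>A. \<Sum>w\<in>A. if u' = u \<and> v' = v then \<theta> * M u' v' / real n else 0)"
      unfolding T_def d_def by (subst triple_sum[OF finA]) (simp cong: if_cong)
    also have "\<dots> = real (card A) * (\<theta> * M u v / real n)"
      by (rule delta2[OF finA uv, where g="\<lambda>u' v'. \<theta> * M u' v' / real n"])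
    also have "\<dots> = \<theta> * M u v" unfolding A_def using npos by simp
    finally show ?thesis .
  qed
  have P3: "sum_list (map snd (filter (\<lambda>(P, dd). e \<in> set P) ps)) \<le> 1 / (2 * real n - 1)"
    if e: "e < length (GG n)" for e
  proof -
    obtain a b where ab: "GG n ! e = (a,b)" by (cases "GG n ! e") auto
    have abA: "a \<in> A" "b \<in> A" using setGG[of n] nth_mem[OF e] ab unfolding A_def by auto
    have "sum_list (map snd (filter (\<lambda>(P, dd). e \<in> set P) ps))
        = (\<Sum>t\<in>T. if e \<in> set (pth n (fst t) (fst (snd t)) (snd (snd t))) then d t else 0)"
      unfolding ps_def
      apply (subst sumlist_filter[OF xs(2)])
      apply (unfold xs(1))
      apply (rule sum.cong, simp)
      unfolding h_def by auto
    also have "\<dots> \<le> (\<Sum>t\<in>T. if e < n*n then (if fst t = a \<and> snd (snd t) = b then d t else 0)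
                        else (if snd (snd t) = a \<and> fst (snd t) = b then d t else 0))"
    proof (rule sum_mono)
      fix t assume t: "t \<in> T"
      show "(if e \<in> set (pth n (fst t) (fst (snd t)) (snd (snd t))) then d t else 0)
         \<le> (if e < n*n then (if fst t = a \<and> snd (snd t) = b then d t else 0)
                        else (if snd (snd t) = a \<and> fst (snd t) = b then d t else 0))"
        using mem_pth[of "fst t" n "fst (snd t)" "snd (snd t)" e] t dnn[OF t] ab
        unfolding T_def A_def by auto
    qed
    also have "\<dots> = \<theta> / real n"
    proof (cases "e < n*n")
      case True
      have "(\<Sum>t\<in>T. if e < n*n then (if fst t = a \<and> snd (snd t) = b then d t else 0)
                        else (if snd (snd t) = a \<and> fst (snd t) = b then d t else 0))
          = (\<Sum>u\<in>A. \<Sum>v\<in>A. \<Sum>w\<in>A. if u = a \<and> w = b then \<theta> * M u v / real n else 0)"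
        unfolding T_def d_def using True by (subst triple_sum[OF finA]) (simp cong: if_cong)
      also have "\<dots> = (\<Sum>v\<in>A. \<theta> * M a v / real n)"
        by (rule delta_row[OF finA abA])
      also have "\<dots> = \<theta> / real n * (\<Sum>v\<in>A. M a v)"
        by (simp add: sum_distrib_left)
      also have "\<dots> = \<theta> / real n" using row[OF abA(1)] by simp
      finally show ?thesis .
    next
      case False
      have "(\<Sum>t\<in>T. if e < n*n then (if fst t = a \<and> snd (snd t) = b then d t else 0)
                        else (if snd (snd t) = a \<and> fst (snd t) = b then d t else 0))
          = (\<Sum>u\<in>A. \<Sum>v\<in>A. \<Sum>w\<in>A. if w = a \<and> v = b then \<theta> * M u v / real n else 0)"
        unfolding T_def d_def using False by (subst triple_sum[OF finA]) (simp cong: if_cong)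
      also have "\<dots> = (\<Sum>u\<in>A. \<theta> * M u b / real n)"
        by (rule delta_col[OF finA abA])
      also have "\<dots> = \<theta> / real n * (\<Sum>u\<in>A. M u b)"
        by (simp add: sum_distrib_left)
      also have "\<dots> = \<theta> / real n" using col[OF abA(2)] by simp
      finally show ?thesis .
    qed
    finally show ?thesis using thn by simp
  qed
  show ?thesis unfolding hosts_def \<theta>_def[symmetric]
    using P1 P2 P3 unfolding A_def by blast
qed


lemma filter_le: "(\<forall>x\<in>set ps. snd x \<ge> (0::real)) \<Longrightarrow> sum_list (map snd (filter Q ps)) \<le> sum_list (map snd ps)"
  by (induction ps) auto

lemma load_total:
  "(\<forall>(P, d)\<in>set ps. is_path G P \<and> d \<ge> (0::real)) \<Longrightarrow>
   sum_list (map snd ps) \<le> (\<Sum>e<length G. sum_list (map snd (filter (\<lambda>(P, d). e \<in> set P) ps)))"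
proof (induction ps)
  case Nil
  then show ?case by simp
next
  case (Cons x ps)
  obtain P d where x: "x = (P, d)" by (cases x) auto
  have pd: "is_path G P" "d \<ge> 0" using Cons.prems x by auto
  have IH: "sum_list (map snd ps) \<le> (\<Sum>e<length G. sum_list (map snd (filter (\<lambda>(P, d). e \<in> set P) ps)))"
    using Cons by auto
  have h: "hd P \<in> set P" "hd P < length G" using pd(1) unfolding is_path_def by auto
  have "d \<le> (\<Sum>e<length G. if e \<in> set P then d else 0)"
    using member_le_sum[of "hd P" "{..<length G}" "\<lambda>e. if e \<in> set P then d else 0"] h pd(2) by auto
  moreover have "(\<Sum>e<length G. sum_list (map snd (filter (\<lambda>(P, d). e \<in> set P) (x # ps))))
     = (\<Sum>e<length G. if e \<in> set P then d else 0) + (\<Sum>e<length G. sum_list (map snd (filter (\<lambda>(P, d). e \<in> set P) ps)))"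
    unfolding x sum.distrib[symmetric] by (rule sum.cong) auto
  ultimately show ?case using IH x by simp
qed

theorem mainTheorem5:
  fixes n :: nat and M :: "nat \<Rightarrow> nat \<Rightarrow> real" and \<kappa> :: real
  assumes "n \<ge> 1" and "doubly_stochastic n M" and "\<kappa> \<le> real n / (2 * real n - 1)"
  shows "\<exists>G. dir_regular n (2 * n - 1) G \<and> throughput n G M \<ge> \<kappa>"
proof -
  define G where "G = GG n"
  define S where "S = {\<theta>. hosts n G (\<lambda>u v. \<theta> * M u v)}"
  have in_S: "real n / (2 * real n - 1) \<in> S"
    unfolding S_def G_def using hosting[OF assms(1,2)] by simp
  have "\<exists>v\<in>{1..n}. M 1 v > 0"
  proof (rule ccontr)
    assume "\<not> ?thesis"
    hence "\<forall>v\<in>{1..n}. M 1 v \<le> 0" by force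
    hence "(\<Sum>j=1..n. M 1 j) \<le> 0" by (intro sum_nonpos) blast
    moreover have "(\<Sum>j=1..n. M 1 j) = 1" using assms(1,2) unfolding doubly_stochastic_def by auto
    ultimately show False by simp
  qed
  then obtain v where v: "v \<in> {1..n}" "M 1 v > 0" by blast
  have bdd: "bdd_above S"
  proof (rule bdd_aboveI)
    fix \<theta> assume "\<theta> \<in> S"
    then obtain ps :: "(nat list \<times> real) list" where
      p1: "\<forall>(P, d)\<in>set ps. is_path G P \<and> d \<ge> 0" and
      p2: "\<forall>u\<in>{1..n}. \<forall>v\<in>{1..n}.
        sum_list (map snd (filter (\<lambda>(P, d). path_src G P = u \<and> path_tgt G P = v) ps)) = \<theta> * M u v" and
      p3: "\<forall>e < length G. sum_list (map snd (filter (\<lambda>(P, d). e \<in> set P) ps)) \<le> 1 / (2 * real n - 1)"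
      unfolding S_def hosts_def by blast
    have "\<theta> * M 1 v = sum_list (map snd (filter (\<lambda>(P, d). path_src G P = 1 \<and> path_tgt G P = v) ps))"
      using p2 v assms(1) by auto
    also have "\<dots> \<le> sum_list (map snd ps)"
      by (rule filter_le) (use p1 in auto)
    also have "\<dots> \<le> (\<Sum>e<length G. sum_list (map snd (filter (\<lambda>(P, d). e \<in> set P) ps)))"
      by (rule load_total[OF p1])
    also have "\<dots> \<le> (\<Sum>e<length G. 1 / (2 * real n - 1))"
      by (rule sum_mono) (use p3 in auto)
    finally have "\<theta> * M 1 v \<le> real (length G) * (1 / (2 * real n - 1))" by simp
    thus "\<theta> \<le> real (length G) * (1 / (2 * real n - 1)) / M 1 v"
      by (simp only: pos_le_divide_eq[OF v(2)])
  qed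
  have "real n / (2 * real n - 1) \<le> Sup S" by (rule cSup_upper[OF in_S bdd])
  hence "throughput n G M \<ge> \<kappa>" using assms(3) unfolding throughput_def S_def by simp
  moreover have "dir_regular n (2 * n - 1) G" unfolding G_def by (rule regular)
  ultimately show ?thesis by blast
qed
end
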